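(* Let $\mu>0$, $1<\alpha\le e^2$, $f(x)=xe^{-x}$, and let $\beta\in L^\infty_+(0,+\infty)$ satisfy $\int_0^{\infty}\beta(a)e^{-\mu a}\,da=1$. Let $\bar u(a)=\ln(\alpha)e^{-\mu a}$ be the positive equilibrium, $a^\star=\sup\{a>0:\int_a^\infty\beta(\sigma)e^{-\mu\sigma}\,d\sigma>0\}$, $\gamma(a)=\int_a^\infty\beta(\sigma)e^{-\mu\sigma}\,d\sigma$, $g(x)=(x-1)^2$, and $$V(u(t,\cdot))=\int_0^\infty\gamma(a)\,g\Big(\frac{u(t,a)}{\bar u(a)}\Big)\,da.$$ Assume $t\mapsto u(t,\cdot)$, $t\in\mathbb R$, is a complete orbit of the semiflow generated by $\partial_tu+\partial_au=-\mu u$, $u(t,0)=\alpha f(\int_0^\infty\beta(a)u(t,a)\,da)$, satisfying $\gamma_-\le\int_0^{a^\star}u(t,a)\,da\le\gamma_+$ for all $t\in\mathbb R$, for some $\gamma_+>\gamma_->0$. Then $t\mapsto V(u(t,\cdot))$ is non-increasing. Moreover, $t\mapsto V(u(t,\cdot))$ is constant if and only if $u(t,a)=\bar u(a)$ for all $t\in\mathbb R$.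
   Context: A complete orbit is a map $t\mapsto u(t,\cdot)\in L^1_+(0,\infty)$ defined for all $t\in\mathbb R$ with $U(s)u(t,\cdot)=u(t+s,\cdot)$ for $s\ge0$, where $U$ is the semiflow of the model in the integrated sense: $U(s)u_0(a)=e^{-\mu s}u_0(a-s)$ for $a\ge s$, $e^{-\mu a}b(s-a)$ for $a\le s$, with $b$ the continuous solution of $b(s)=\alpha f\big(\int_s^\infty\beta(a)e^{-\mu s}u_0(a-s)\,da+\int_0^s\beta(a)e^{-\mu a}b(s-a)\,da\big)$. *)

theory Defs
  imports "HOL-Analysis.Analysis"
begin

definition f_ricker :: "real \<Rightarrow> real" where
  "f_ricker x = x * exp (- x)"

definition gamma_fun :: "(real \<Rightarrow> real) \<Rightarrow> real \<Rightarrow> real \<Rightarrow> real" where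
  "gamma_fun \<beta> \<mu> a = (LBINT \<sigma>:{a..}. \<beta> \<sigma> * exp (- \<mu> * \<sigma>))"

definition astar :: "(real \<Rightarrow> real) \<Rightarrow> real \<Rightarrow> ereal" where
  "astar \<beta> \<mu> = Sup (ereal ` {a. 0 < a \<and> gamma_fun \<beta> \<mu> a > 0})"

definition ubar :: "real \<Rightarrow> real \<Rightarrow> real \<Rightarrow> real" where
  "ubar \<alpha> \<mu> a = ln \<alpha> * exp (- \<mu> * a)"

definition g_fun :: "real \<Rightarrow> real" where
  "g_fun x = (x - 1)\<^sup>2"

definition V_fun :: "(real \<Rightarrow> real) \<Rightarrow> real \<Rightarrow> real \<Rightarrow> (real \<Rightarrow> real) \<Rightarrow> ennreal" where
  "V_fun \<beta> \<mu> \<alpha> v =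
     (\<integral>\<^sup>+ a. ennreal (gamma_fun \<beta> \<mu> a * g_fun (v a / ubar \<alpha> \<mu> a)) * indicator {0<..} a \<partial>lborel)"

text \<open>Integrated semiflow: U(s) v0 = w, where b is a continuous solution of the
  renewal (Volterra) equation on [0,s]; equality in L^1(0,infinity), i.e. a.e.\<close>
definition semiflow_step ::
  "(real \<Rightarrow> real) \<Rightarrow> real \<Rightarrow> real \<Rightarrow> real \<Rightarrow> (real \<Rightarrow> real) \<Rightarrow> (real \<Rightarrow> real) \<Rightarrow> bool" where
  "semiflow_step \<beta> \<mu> \<alpha> s v0 w \<longleftrightarrow>
     (\<exists>b. continuous_on {0..s} b \<and>
        (\<forall>\<tau>\<in>{0..s}. b \<tau> = \<alpha> * f_ricker
            ((LBINT a:{\<tau>..}. \<beta> a * exp (- \<mu> * \<tau>) * v0 (a - \<tau>))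
             + (LBINT a:{0..\<tau>}. \<beta> a * exp (- \<mu> * a) * b (\<tau> - a)))) \<and>
        (AE a in lborel. 0 < a \<longrightarrow>
            w a = (if s \<le> a then exp (- \<mu> * s) * v0 (a - s) else exp (- \<mu> * a) * b (s - a))))"

definition complete_orbit :: "(real \<Rightarrow> real) \<Rightarrow> real \<Rightarrow> real \<Rightarrow> (real \<Rightarrow> real \<Rightarrow> real) \<Rightarrow> bool" where
  "complete_orbit \<beta> \<mu> \<alpha> u \<longleftrightarrow>
     (\<forall>t. set_integrable lborel {0<..} (u t) \<and> (AE a in lborel. 0 < a \<longrightarrow> 0 \<le> u t a)) \<and>
     (\<forall>t s. 0 \<le> s \<longrightarrow> semiflow_step \<beta> \<mu> \<alpha> s (u t) (u (t + s)))"

end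

theory Submission
  imports Defs "HOL-Probability.Distributions"
begin


lemma E_strict:
  fixes y :: real assumes y: "0 < y" "y < 1"
  shows "(1 - y) * exp (2 * y) < 1 + y"
proof -
  define \<psi> where "\<psi> z = ln (1 + z) - ln (1 - z) - 2 * z" for z :: real
  have "\<psi> 0 < \<psi> y"
  proof (rule DERIV_pos_imp_increasing_open[OF y(1)])
    fix z :: real assume z: "0 < z" "z < y"
    have "(\<psi> has_real_derivative (1 / (1 + z) + 1 / (1 - z) - 2)) (at z)"
    proof -
      have zz: "1 - z * z \<noteq> 0" "1 + z \<noteq> 0" "1 - z \<noteq> 0" proof -
        have "z * z < 1 * 1" using z y by (intro mult_strict_mono) auto
        then show "1 - z * z \<noteq> 0" "1 + z \<noteq> 0" "1 - z \<noteq> 0" using z y by auto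
      qed
      show ?thesis
      unfolding \<psi>_def using z y zz
      apply (auto intro!: derivative_eq_intros)
      done
    qed
    moreover have "1 / (1 + z) + 1 / (1 - z) - 2 > 0"
    proof -
      have zz: "0 < z * z" using z by simp
      have "1 - z < 1 / (1 + z)" using z y zz by (simp add: field_simps algebra_simps)
      moreover have "1 + z < 1 / (1 - z)" using z y zz by (simp add: field_simps algebra_simps)
      ultimately show ?thesis by linarith
    qed
    ultimately show "\<exists>l. (\<psi> has_real_derivative l) (at z) \<and> 0 < l" by blast
  next
    show "continuous_on {0..y} \<psi>" unfolding \<psi>_def using y
      by (intro continuous_intros) auto
  qed
  then have "2 * y < ln (1 + y) - ln (1 - y)" by (simp add: \<psi>_def)
  then have "exp (2 * y) < exp (ln (1 + y) - ln (1 - y))" by simp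
  also have "\<dots> = (1 + y) / (1 - y)" using y by (simp add: exp_diff)
  finally show ?thesis using y by (simp add: field_simps)
qed

definition hfun :: "real \<Rightarrow> real \<Rightarrow> real" where
  "hfun L x = x * exp (L * (1 - x))"

lemma h_strict:
  fixes L x :: real
  assumes L: "0 < L" "L \<le> 2" and x: "0 \<le> x" "x \<noteq> 0" "x \<noteq> 1"
  shows "g_fun (hfun L x) < g_fun x"
proof -
  define h where "h = hfun L x"
  have key: "0 < (x - h) * (x + h - 2)"
  proof (cases "x > 1")
    case True
    have "L * (1 - x) < 0" using True L by (intro mult_pos_neg) auto
    then have E: "exp (L * (1 - x)) < 1" by simp
    have h1: "h < x" unfolding h_def hfun_def using E True by simp
    have h2: "h > 2 - x"
    proof (cases "x \<ge> 2")
      case True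
      have "0 < x * exp (L * (1 - x))" using True by simp
      then show ?thesis unfolding h_def hfun_def using True by linarith
    next
      case False
      define y where "y = x - 1"
      have y: "0 < y" "y < 1" using True False unfolding y_def by auto
      have "2 * (1 - x) \<le> L * (1 - x)" using L y unfolding y_def
        by (intro mult_right_mono_neg) auto
      then have "exp (- 2 * y) \<le> exp (L * (1 - x))" unfolding y_def by simp
      moreover have "1 - y < (1 + y) * exp (- 2 * y)"
        using E_strict[OF y] by (simp add: exp_minus field_simps)
      ultimately have "1 - y < (1 + y) * exp (L * (1 - x))"
        using y by (smt (verit) mult_left_mono)
      then show ?thesis unfolding h_def hfun_def y_def by simp
    qed
    show ?thesis using h1 h2 by (intro mult_pos_pos) auto
  next
    case False
    then have x1: "0 < x" "x < 1" using x by auto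
    have "L * (1 - x) > 0" using x1 L by (intro mult_pos_pos) auto
    then have E: "exp (L * (1 - x)) > 1" by simp
    have h1: "h > x" unfolding h_def hfun_def using E x1 by simp
    define y where "y = 1 - x"
    have y: "0 < y" "y < 1" using x1 unfolding y_def by auto
    have "L * (1 - x) \<le> 2 * (1 - x)" using L y unfolding y_def
      by (intro mult_right_mono) auto
    then have "exp (L * (1 - x)) \<le> exp (2 * y)" unfolding y_def by simp
    then have "h \<le> (1 - y) * exp (2 * y)" unfolding h_def hfun_def y_def using x1
      by (simp add: mult_left_mono)
    also have "\<dots> < 1 + y" by (rule E_strict[OF y])
    finally have h2: "h < 2 - x" unfolding y_def by simp
    show ?thesis using h1 h2 by (intro mult_neg_neg) auto
  qed
  have "g_fun x - g_fun h = (x - h) * (x + h - 2)"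
    unfolding g_fun_def by (simp add: power2_eq_square algebra_simps)
  then show ?thesis using key unfolding h_def by simp
qed

lemma h_le:
  fixes L x :: real
  assumes L: "0 < L" "L \<le> 2" and x: "0 \<le> x"
  shows "g_fun (hfun L x) \<le> g_fun x"
  using h_strict[OF L x] by (cases "x = 0 \<or> x = 1") (auto simp: hfun_def)


lemma AE_shift:
  assumes "AE x in lborel. P x"
  shows "AE x in lborel. P (x - d :: real)"
proof -
  from assms obtain N where N: "{x. \<not> P x} \<subseteq> N" "N \<in> null_sets lborel"
  proof -
    from assms obtain N where "{x \<in> space lborel. \<not> P x} \<subseteq> N" "emeasure lborel N = 0" "N \<in> sets lborel"
      by (rule AE_E)
    then show ?thesis using that[of N] by (simp add: null_setsI)
  qed
  have "{x. x - d \<in> N} \<in> null_sets lborel" using null_sets_translation[OF N(2)] .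
  then show ?thesis
    by (rule AE_I') (use N in auto)
qed

lemma AE_cont_eq:
  fixes p q :: "real \<Rightarrow> real"
  assumes S: "open S" and cp: "continuous_on S p" and cq: "continuous_on S q"
    and ae: "AE x in lborel. x \<in> S \<longrightarrow> p x = q x"
    and x0: "x0 \<in> S"
  shows "p x0 = q x0"
proof (rule ccontr)
  assume ne: "p x0 \<noteq> q x0"
  have "continuous_on S (\<lambda>x. p x - q x)" using cp cq by (intro continuous_intros)
  then have "isCont (\<lambda>x. p x - q x) x0" using S x0 by (simp add: continuous_on_eq_continuous_at)
  moreover have "open (-{0::real})" by auto
  ultimately obtain T where T: "open T" "x0 \<in> T" "\<forall>y\<in>T. p y - q y \<in> -{0}"
    using ne by (metis (no_types, lifting) ComplI continuous_at_open right_minus_eq singletonD)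
  have "open (S \<inter> T)" "x0 \<in> S \<inter> T" using S T x0 by auto
  then obtain e where e: "e > 0" "ball x0 e \<subseteq> S \<inter> T" by (meson openE)
  have sub: "{x0 - e<..<x0 + e} \<subseteq> S \<inter> T" proof
    fix x assume "x \<in> {x0 - e<..<x0 + e}"
    then have "x \<in> ball x0 e" by (auto simp: ball_def dist_real_def abs_if)
    then show "x \<in> S \<inter> T" using e(2) by blast
  qed
  have "AE x in lborel. x \<notin> {x0 - e<..<x0 + e}"
    using ae by eventually_elim (use sub T in force)
  then have "emeasure lborel {x0 - e<..<x0 + e} = 0"
    by (subst (asm) AE_iff_measurable[of "{x0 - e<..<x0 + e}"]) auto
  then show False using e(1) by simp
qed

locale orbit =
  fixes \<beta> :: "real \<Rightarrow> real" and \<mu> \<alpha> \<gamma>m M :: real and u :: "real \<Rightarrow> real \<Rightarrow> real"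
  assumes mu: "\<mu> > 0" and a1: "1 < \<alpha>" and a2: "\<alpha> \<le> exp 2"
    and bm: "\<beta> \<in> borel_measurable lborel"
    and bM: "AE a in lborel. 0 < a \<longrightarrow> 0 \<le> \<beta> a \<and> \<beta> a \<le> M"
    and int1: "(LBINT a:{0<..}. \<beta> a * exp (- \<mu> * a)) = 1"
    and co: "complete_orbit \<beta> \<mu> \<alpha> u"
    and gm: "0 < \<gamma>m"
    and gb: "\<forall>t. \<gamma>m \<le> (LBINT a:{a. 0 < a \<and> ereal a < astar \<beta> \<mu>}. u t a)"
begin

definition bf :: "real \<Rightarrow> real \<Rightarrow> real \<Rightarrow> real" where
  "bf t s = (SOME b. continuous_on {0..s} b \<and>
        (\<forall>\<tau>\<in>{0..s}. b \<tau> = \<alpha> * f_ricker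
            ((LBINT a:{\<tau>..}. \<beta> a * exp (- \<mu> * \<tau>) * u t (a - \<tau>))
             + (LBINT a:{0..\<tau>}. \<beta> a * exp (- \<mu> * a) * b (\<tau> - a)))) \<and>
        (AE a in lborel. 0 < a \<longrightarrow>
            u (t + s) a = (if s \<le> a then exp (- \<mu> * s) * u t (a - s) else exp (- \<mu> * a) * b (s - a))))"

lemma bf:
  assumes "0 \<le> s"
  shows "continuous_on {0..s} (bf t s) \<and>
        (\<forall>\<tau>\<in>{0..s}. bf t s \<tau> = \<alpha> * f_ricker
            ((LBINT a:{\<tau>..}. \<beta> a * exp (- \<mu> * \<tau>) * u t (a - \<tau>))
             + (LBINT a:{0..\<tau>}. \<beta> a * exp (- \<mu> * a) * bf t s (\<tau> - a)))) \<and>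
        (AE a in lborel. 0 < a \<longrightarrow>
            u (t + s) a = (if s \<le> a then exp (- \<mu> * s) * u t (a - s) else exp (- \<mu> * a) * bf t s (s - a)))"
proof -
  have "semiflow_step \<beta> \<mu> \<alpha> s (u t) (u (t + s))" using co assms unfolding complete_orbit_def by blast
  then show ?thesis unfolding semiflow_step_def bf_def by (rule someI_ex)
qed

lemma W:
  assumes s: "0 < s" and d: "0 \<le> d"
  shows "AE a in lborel. d < a \<and> a < d + s \<longrightarrow> u (t + s + d) a = exp (- \<mu> * a) * bf t s (s + d - a)"
proof -
  have A: "AE a in lborel. 0 < a \<longrightarrow>
     u (t + s + d) a = (if d \<le> a then exp (- \<mu> * d) * u (t + s) (a - d) else exp (- \<mu> * a) * bf (t + s) d (d - a))"
    using bf[OF d, of "t + s"] by blast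
  have B0: "AE a in lborel. 0 < a \<longrightarrow>
     u (t + s) a = (if s \<le> a then exp (- \<mu> * s) * u t (a - s) else exp (- \<mu> * a) * bf t s (s - a))"
    using bf[of s t] s by auto
  have B: "AE a in lborel. 0 < a - d \<longrightarrow>
     u (t + s) (a - d) = (if s \<le> a - d then exp (- \<mu> * s) * u t (a - d - s) else exp (- \<mu> * (a - d)) * bf t s (s - (a - d)))"
    using AE_shift[OF B0, of d] by simp
  show ?thesis using A B
  proof eventually_elim
    case (elim a)
    show ?case
    proof
      assume a: "d < a \<and> a < d + s"
      then have "u (t + s + d) a = exp (- \<mu> * d) * u (t + s) (a - d)" using elim(1) d by auto
      also have "\<dots> = exp (- \<mu> * d) * (exp (- \<mu> * (a - d)) * bf t s (s - (a - d)))" using elim(2) a by auto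
      also have "\<dots> = exp (- \<mu> * a) * bf t s (s + d - a)"
        by (simp add: mult.assoc[symmetric] exp_add[symmetric] algebra_simps)
      finally show "u (t + s + d) a = exp (- \<mu> * a) * bf t s (s + d - a)" .
    qed
  qed
qed

definition Bb :: "real \<Rightarrow> real" where "Bb r = bf (r - 1) 2 1"

lemma cont_bf_shift:
  assumes "0 \<le> s" "\<And>a. a \<in> S \<Longrightarrow> 0 \<le> c - a \<and> c - a \<le> s"
  shows "continuous_on S (\<lambda>a. bf t s (c - a))"
proof -
  have "continuous_on S (\<lambda>a. c - a)" by (intro continuous_intros)
  moreover have "(\<lambda>a. c - a) ` S \<subseteq> {0..s}" using assms(2) by auto
  ultimately show ?thesis using continuous_on_compose2[OF conjunct1[OF bf[OF assms(1)]]] by blast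
qed

lemma claimC:
  assumes s: "0 < s" and tau: "0 < \<tau>" "\<tau> < s"
  shows "bf t s \<tau> = Bb (t + \<tau>)"
proof -
  define r where "r = t + \<tau>"
  define T where "T = max (t + s) (r + 1)"
  define d where "d = T - (t + s)"
  define d' where "d' = T - (r - 1 + 2)"
  have d: "0 \<le> d" "0 \<le> d'" unfolding d_def d'_def T_def by auto
  have W1: "AE a in lborel. d < a \<and> a < d + s \<longrightarrow> u T a = exp (- \<mu> * a) * bf t s (s + d - a)"
    using W[OF s d(1), of t] unfolding d_def by simp
  have W2: "AE a in lborel. d' < a \<and> a < d' + 2 \<longrightarrow> u T a = exp (- \<mu> * a) * bf (r - 1) 2 (2 + d' - a)"
    using W[OF _ d(2), of 2 "r - 1"] unfolding d'_def by simp
  define S where "S = {max d d' <..< min (d + s) (d' + 2)}"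
  have a0: "T - r \<in> S" using tau unfolding S_def d_def d'_def T_def r_def by auto
  have "bf t s (s + d - (T - r)) = bf (r - 1) 2 (2 + d' - (T - r))"
  proof (rule AE_cont_eq[OF _ _ _ _ a0])
    show "open S" unfolding S_def by simp
    show "continuous_on S (\<lambda>a. bf t s (s + d - a))"
      by (rule cont_bf_shift) (use s in \<open>auto simp: S_def\<close>)
    show "continuous_on S (\<lambda>a. bf (r - 1) 2 (2 + d' - a))"
      by (rule cont_bf_shift) (auto simp: S_def)
    show "AE x in lborel. x \<in> S \<longrightarrow> bf t s (s + d - x) = bf (r - 1) 2 (2 + d' - x)"
      using W1 W2 by eventually_elim (auto simp: S_def)
  qed
  moreover have "s + d - (T - r) = \<tau>" "2 + d' - (T - r) = 1" unfolding d_def d'_def r_def by auto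
  ultimately show ?thesis unfolding Bb_def r_def by simp
qed


lemma rep: "AE a in lborel. 0 < a \<longrightarrow> u T a = exp (- \<mu> * a) * Bb (T - a)"
proof -
  have "AE a in lborel. \<forall>n::nat. 0 < a \<and> a < real n + 1 \<longrightarrow> u T a = exp (- \<mu> * a) * Bb (T - a)"
  proof (rule AE_all_countable[THEN iffD2], intro allI)
    fix n :: nat
    define s where "s = real n + 1"
    have s: "0 < s" unfolding s_def by simp
    have "AE a in lborel. 0 < a \<and> a < 0 + s \<longrightarrow> u (T - s + s + 0) a = exp (- \<mu> * a) * bf (T - s) s (s + 0 - a)"
      by (rule W[OF s]) simp
    then show "AE a in lborel. 0 < a \<and> a < real n + 1 \<longrightarrow> u T a = exp (- \<mu> * a) * Bb (T - a)"
    proof eventually_elim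
      case (elim a)
      show ?case
      proof
        assume a: "0 < a \<and> a < real n + 1"
        then have "bf (T - s) s (s - a) = Bb (T - s + (s - a))" using s by (intro claimC) (auto simp: s_def)
        then show "u T a = exp (- \<mu> * a) * Bb (T - a)" using elim a by (simp add: s_def)
      qed
    qed
  qed
  then show ?thesis
  proof eventually_elim
    case (elim a)
    obtain n :: nat where "a < real n" using reals_Archimedean2 by blast
    then show ?case using elim[rule_format, of n] by auto
  qed
qed

lemma Bb_local: "r0 - 1 < r \<Longrightarrow> r < r0 + 1 \<Longrightarrow> Bb r = bf (r0 - 1) 2 (r - (r0 - 1))"
  using claimC[of 2 "r - (r0 - 1)" "r0 - 1"] by simp

lemma Bb_cont: "continuous_on UNIV Bb"
proof -
  have "isCont Bb r0" for r0
  proof -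
    define S where "S = {r0 - 1 <..< r0 + 1}"
    have "continuous_on S (\<lambda>r. bf (r0 - 1) 2 (r - (r0 - 1)))"
    proof -
      have "continuous_on S (\<lambda>r. r - (r0 - 1))" by (intro continuous_intros)
      moreover have "(\<lambda>r. r - (r0 - 1)) ` S \<subseteq> {0..2}" unfolding S_def by auto
      ultimately show ?thesis using continuous_on_compose2[OF conjunct1[OF bf[of 2 "r0 - 1"]]] by auto
    qed
    then have "continuous_on S Bb"
      by (rule continuous_on_eq) (auto simp: S_def Bb_local)
    then show ?thesis unfolding S_def by (simp add: continuous_on_eq_continuous_at)
  qed
  then show ?thesis by (simp add: continuous_at_imp_continuous_on)
qed

lemma Bb_isCont: "isCont Bb r"
  using Bb_cont by (simp add: continuous_on_eq_continuous_at)

lemma Bb_meas [measurable]: "Bb \<in> borel_measurable borel"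
  using Bb_cont by (simp add: borel_measurable_continuous_onI)

lemma Bb_nonneg: "0 \<le> Bb r"
proof -
  define T where "T = r + 1"
  have "AE a in lborel. 0 < a \<longrightarrow> 0 \<le> u T a"
    using co unfolding complete_orbit_def by blast
  with rep[of T] have ae: "AE a in lborel. a \<in> {0<..} \<longrightarrow> Bb (T - a) = max 0 (Bb (T - a))"
    by eventually_elim (auto simp: zero_le_mult_iff)
  have c: "continuous_on {0<..} (\<lambda>a. Bb (T - a))"
    by (intro continuous_on_compose2[OF Bb_cont] continuous_intros) auto
  have "Bb (T - 1) = max 0 (Bb (T - 1))"
    by (rule AE_cont_eq[OF _ c _ ae]) (auto intro!: continuous_intros c)
  then show ?thesis unfolding T_def by (metis add_diff_cancel_right' max.orderI max_def)
qed

lemma f_le: "f_ricker y \<le> exp (- 1)"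
proof -
  have "1 + (y - 1) \<le> exp (y - 1)" by (rule exp_ge_add_one_self)
  then have "y \<le> exp y * exp (- 1)" by (simp add: exp_diff exp_minus field_simps)
  then have "y * exp (- y) \<le> exp (- 1)"
    by (simp add: exp_minus field_simps)
  then show ?thesis by (simp add: f_ricker_def)
qed

lemma Bb_le: "Bb r \<le> \<alpha> * exp (- 1)"
proof -
  have "Bb r = \<alpha> * f_ricker ((LBINT a:{1..}. \<beta> a * exp (- \<mu> * 1) * u (r - 1) (a - 1))
             + (LBINT a:{0..1}. \<beta> a * exp (- \<mu> * a) * bf (r - 1) 2 (1 - a)))"
    unfolding Bb_def using bf[of 2 "r - 1"] by auto
  also have "\<dots> \<le> \<alpha> * exp (- 1)" using f_le a1 by (intro mult_left_mono) auto
  finally show ?thesis .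
qed


lemma bm' [measurable]: "\<beta> \<in> borel_measurable borel"
  using bm by simp

lemma k_int: "set_integrable lborel {0<..} (\<lambda>a. \<beta> a * exp (- \<mu> * a))"
  using int1 not_integrable_integral_eq unfolding set_lebesgue_integral_def set_integrable_def
  by fastforce

lemma kphi_int:
  assumes "\<And>a. \<bar>\<phi> a\<bar> \<le> C" and [measurable]: "\<phi> \<in> borel_measurable borel"
    and [measurable]: "A \<in> sets borel" and "A \<subseteq> {0<..}"
  shows "set_integrable lborel A (\<lambda>a. \<beta> a * exp (- \<mu> * a) * \<phi> a)"
proof (rule set_integrable_bound)
  have "set_integrable lborel A (\<lambda>a. \<beta> a * exp (- \<mu> * a))"
    by (rule set_integrable_subset[OF k_int]) (use assms in auto)
  then show "set_integrable lborel A (\<lambda>a. C * (\<beta> a * exp (- \<mu> * a)))"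
    by (rule set_integrable_mult_right)
  show "set_borel_measurable lborel A (\<lambda>a. \<beta> a * exp (- \<mu> * a) * \<phi> a)"
    unfolding set_borel_measurable_def by measurable
  have C: "0 \<le> C" using assms(1)[of 0] by linarith
  show "AE x in lborel. x \<in> A \<longrightarrow> norm (\<beta> x * exp (- \<mu> * x) * \<phi> x) \<le> norm (C * (\<beta> x * exp (- \<mu> * x)))"
  proof (intro AE_I2 impI)
    fix x
    have "\<bar>\<beta> x * exp (- \<mu> * x)\<bar> * \<bar>\<phi> x\<bar> \<le> \<bar>\<beta> x * exp (- \<mu> * x)\<bar> * C"
      by (intro mult_left_mono assms(1)) auto
    then show "norm (\<beta> x * exp (- \<mu> * x) * \<phi> x) \<le> norm (C * (\<beta> x * exp (- \<mu> * x)))"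
      using C by (simp add: abs_mult mult_ac)
  qed
qed

lemma Bb_abs: "\<bar>Bb r\<bar> \<le> \<alpha> * exp (- 1)"
  using Bb_nonneg[of r] Bb_le[of r] by linarith

lemma LINT_ae_set:
  fixes f :: "real \<Rightarrow> real"
  assumes [measurable]: "f \<in> borel_measurable borel" "A \<in> sets borel" "B \<in> sets borel"
    and "AE x in lborel. (x \<in> A) = (x \<in> B)"
  shows "(LBINT x:A. f x) = (LBINT x:B. f x)"
  unfolding set_lebesgue_integral_def
  by (rule integral_cong_AE) (use assms(4) in \<open>auto simp: indicator_def\<close>)

lemma volterra: "Bb r = \<alpha> * f_ricker (LBINT a:{0<..}. \<beta> a * exp (- \<mu> * a) * Bb (r - a))"
proof -
  define t where "t = r - 1"
  define F where "F a = \<beta> a * exp (- \<mu> * a) * Bb (r - a)" for a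
  have Fm [measurable]: "F \<in> borel_measurable borel" unfolding F_def by measurable
  have Fi: "set_integrable lborel A F" if "A \<in> sets borel" "A \<subseteq> {0<..}" for A
    unfolding F_def by (rule kphi_int[OF Bb_abs _ that]) measurable
  have eq: "Bb r = \<alpha> * f_ricker ((LBINT a:{1..}. \<beta> a * exp (- \<mu> * 1) * u t (a - 1))
             + (LBINT a:{0..1}. \<beta> a * exp (- \<mu> * a) * bf t 2 (1 - a)))"
    unfolding Bb_def t_def using bf[of 2 "r - 1"] by auto
  have um: "(\<lambda>a. indicator {0<..} a * u t a) \<in> borel_measurable borel"
  proof -
    have "integrable lborel (\<lambda>a. indicator {0<..} a *\<^sub>R u t a)"
      using co unfolding complete_orbit_def set_integrable_def by blast
    then have "(\<lambda>a. indicator {0<..} a *\<^sub>R u t a) \<in> borel_measurable lborel"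
      by (rule borel_measurable_integrable)
    then show ?thesis by simp
  qed
  define c0 where "c0 = \<beta> 1 * exp (- \<mu> * 1) * u t 0"
  have h1: "(\<lambda>a. indicat_real {1..} a *\<^sub>R (\<beta> a * exp (- \<mu> * 1) * u t (a - 1))) =
     (\<lambda>a. \<beta> a * exp (- \<mu> * 1) * (indicator {0<..} (a - 1) * u t (a - 1)) + indicator {1} a * c0)"
  proof (rule ext)
    fix a :: real
    consider "a < 1" | "a = 1" | "a > 1" by linarith
    then show "indicat_real {1..} a *\<^sub>R (\<beta> a * exp (- \<mu> * 1) * u t (a - 1)) =
       \<beta> a * exp (- \<mu> * 1) * (indicator {0<..} (a - 1) * u t (a - 1)) + indicator {1} a * c0"
      by cases (simp_all add: indicator_def c0_def)
  qed
  have h1m: "(\<lambda>a. indicat_real {1..} a *\<^sub>R (\<beta> a * exp (- \<mu> * 1) * u t (a - 1))) \<in> borel_measurable borel"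
  proof -
    have "(\<lambda>a. indicator {0<..} (a - 1) * u t (a - 1)) \<in> borel_measurable borel"
      using measurable_compose[OF _ um, of "\<lambda>a. a - 1" borel] by simp
    then show ?thesis unfolding h1 by measurable
  qed
  have I1: "(LBINT a:{1..}. \<beta> a * exp (- \<mu> * 1) * u t (a - 1)) = (LBINT a:{1<..}. F a)"
    unfolding set_lebesgue_integral_def
  proof (rule integral_cong_AE)
    show "AE x in lborel. indicat_real {1..} x *\<^sub>R (\<beta> x * exp (- \<mu> * 1) * u t (x - 1)) = indicat_real {1<..} x *\<^sub>R F x"
      using AE_shift[OF rep[of t], of 1] AE_lborel_singleton[of 1]
    proof eventually_elim
      case (elim x)
      show ?case
      proof (cases "1 < x")
        case True
        then have "u t (x - 1) = exp (- \<mu> * (x - 1)) * Bb (r - x)" using elim by (simp add: t_def)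
        then have "\<beta> x * exp (- \<mu> * 1) * u t (x - 1) = F x"
          by (simp add: F_def mult_ac exp_add[symmetric] algebra_simps)
        then show ?thesis using True by simp
      next
        case False
        then show ?thesis using elim by (auto simp: indicator_def)
      qed
    qed
  next
    show "(\<lambda>x. indicat_real {1..} x *\<^sub>R (\<beta> x * exp (- \<mu> * 1) * u t (x - 1))) \<in> borel_measurable lborel"
      using h1m by simp
  next
    show "(\<lambda>x. indicat_real {1<..} x *\<^sub>R F x) \<in> borel_measurable lborel" by simp
  qed
  have bfm: "(\<lambda>x. indicat_real {0..1} x *\<^sub>R (\<beta> x * exp (- \<mu> * x) * bf t 2 (1 - x))) \<in> borel_measurable borel"
  proof -
    have "continuous_on {0..1} (\<lambda>x. bf t 2 (1 - x))" by (rule cont_bf_shift) auto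
    then have "(\<lambda>x. indicat_real {0..1} x *\<^sub>R bf t 2 (1 - x)) \<in> borel_measurable borel"
      by (intro borel_measurable_continuous_on_indicator) simp_all
    then have "(\<lambda>x. (\<beta> x * exp (- \<mu> * x)) * (indicat_real {0..1} x *\<^sub>R bf t 2 (1 - x))) \<in> borel_measurable borel"
      by measurable
    then show ?thesis by (simp add: mult_ac)
  qed
  have I2: "(LBINT a:{0..1}. \<beta> a * exp (- \<mu> * a) * bf t 2 (1 - a)) = (LBINT a:{0<..1}. F a)"
    unfolding set_lebesgue_integral_def
  proof (rule integral_cong_AE)
    show "AE x in lborel. indicat_real {0..1} x *\<^sub>R (\<beta> x * exp (- \<mu> * x) * bf t 2 (1 - x)) = indicat_real {0<..1} x *\<^sub>R F x"
      using AE_lborel_singleton[of 0] AE_lborel_singleton[of 1]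
    proof eventually_elim
      case (elim x)
      show ?case
      proof (cases "0 < x \<and> x < 1")
        case True
        then have "bf t 2 (1 - x) = Bb (t + (1 - x))" by (intro claimC) auto
        then show ?thesis using True by (simp add: F_def t_def)
      next
        case False
        then show ?thesis using elim by (auto simp: indicator_def)
      qed
    qed
  next
    show "(\<lambda>x. indicat_real {0..1} x *\<^sub>R (\<beta> x * exp (- \<mu> * x) * bf t 2 (1 - x))) \<in> borel_measurable lborel"
      using bfm by simp
  next
    show "(\<lambda>x. indicat_real {0<..1} x *\<^sub>R F x) \<in> borel_measurable lborel" by simp
  qed
  have "(LBINT a:{0<..1}. F a) + (LBINT a:{1<..}. F a) = (LBINT a:{0<..1} \<union> {1<..}. F a)"
    by (rule set_integral_Un_AE[symmetric]) (auto intro!: Fi)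
  also have "{0<..1} \<union> {1<..} = ({0<..} :: real set)" by auto
  finally have "(LBINT a:{1..}. \<beta> a * exp (- \<mu> * 1) * u t (a - 1))
             + (LBINT a:{0..1}. \<beta> a * exp (- \<mu> * a) * bf t 2 (1 - a)) = (LBINT a:{0<..}. F a)"
    using I1 I2 by simp
  then show ?thesis using eq unfolding F_def by simp
qed


definition L :: real where "L = ln \<alpha>"

lemma L_pos: "0 < L" unfolding L_def using a1 by simp

lemma L_le2: "L \<le> 2"
proof -
  have "ln \<alpha> \<le> ln (exp 2)" using a1 a2 by (subst ln_le_cancel_iff) auto
  then show ?thesis unfolding L_def by simp
qed

lemma alpha_eq: "\<alpha> = exp L" unfolding L_def using a1 by simp

definition B :: "real \<Rightarrow> real" where "B r = Bb r / L"
definition G :: "real \<Rightarrow> real" where "G r = g_fun (B r)"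
definition xr :: "real \<Rightarrow> real" where "xr r = (LBINT \<sigma>:{0<..}. \<beta> \<sigma> * exp (- \<mu> * \<sigma>) * B (r - \<sigma>))"
definition Bmax :: real where "Bmax = \<alpha> * exp (- 1) / L"
definition Gm :: real where "Gm = (Bmax + 1)\<^sup>2"

lemma B_nonneg: "0 \<le> B r" unfolding B_def using Bb_nonneg L_pos by simp
lemma B_le: "B r \<le> Bmax" unfolding B_def Bmax_def using Bb_le L_pos by (simp add: divide_right_mono)
lemma B_abs: "\<bar>B r\<bar> \<le> Bmax" using B_nonneg[of r] B_le[of r] by linarith
lemma B_cont: "continuous_on UNIV B" unfolding B_def using Bb_cont L_pos by (intro continuous_intros) auto
lemma B_isCont: "isCont B r" using B_cont by (simp add: continuous_on_eq_continuous_at)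
lemma B_meas [measurable]: "B \<in> borel_measurable borel" unfolding B_def by measurable
lemma G_meas [measurable]: "G \<in> borel_measurable borel" unfolding G_def g_fun_def by measurable
lemma G_nonneg: "0 \<le> G r" unfolding G_def g_fun_def by simp
lemma G_le: "G r \<le> Gm"
proof -
  have "\<bar>B r - 1\<bar> \<le> Bmax + 1" using B_nonneg[of r] B_le[of r] by linarith
  then have "\<bar>B r - 1\<bar>\<^sup>2 \<le> (Bmax + 1)\<^sup>2" by (intro power_mono) auto
  then show ?thesis unfolding G_def g_fun_def Gm_def by simp
qed
lemma G_abs: "\<bar>G r\<bar> \<le> Gm" using G_nonneg[of r] G_le[of r] by linarith

lemma B_eq: "B r = hfun L (xr r)"
proof -
  have "(\<lambda>\<sigma>. \<beta> \<sigma> * exp (- \<mu> * \<sigma>) * Bb (r - \<sigma>)) = (\<lambda>\<sigma>. L * (\<beta> \<sigma> * exp (- \<mu> * \<sigma>) * B (r - \<sigma>)))"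
    using L_pos by (auto simp: B_def fun_eq_iff)
  then have I: "(LBINT \<sigma>:{0<..}. \<beta> \<sigma> * exp (- \<mu> * \<sigma>) * Bb (r - \<sigma>)) = L * xr r"
    unfolding xr_def by simp
  have "Bb r = exp L * (L * xr r * exp (- (L * xr r)))"
    using volterra[of r] unfolding I alpha_eq[symmetric] f_ricker_def by (simp add: alpha_eq[symmetric])
  then have "B r = xr r * (exp L * exp (- (L * xr r)))" unfolding B_def using L_pos by (simp add: field_simps)
  also have "\<dots> = hfun L (xr r)" unfolding hfun_def by (simp add: exp_add[symmetric] algebra_simps)
  finally show ?thesis .
qed

lemma k_nonneg_ae: "AE \<sigma> in lborel. \<sigma> \<in> {0<..} \<longrightarrow> 0 \<le> \<beta> \<sigma> * exp (- \<mu> * \<sigma>)"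
  using bM by eventually_elim auto

lemma kphi_int0:
  assumes "\<And>a. \<bar>\<phi> a\<bar> \<le> C" and [measurable]: "\<phi> \<in> borel_measurable borel"
  shows "set_integrable lborel {0<..} (\<lambda>a. \<beta> a * exp (- \<mu> * a) * \<phi> a)"
  by (rule kphi_int[OF assms]) auto

lemma kphi_nonneg:
  assumes "\<And>a. 0 \<le> \<phi> a" "\<And>a. \<bar>\<phi> a\<bar> \<le> C" and [measurable]: "\<phi> \<in> borel_measurable borel"
  shows "0 \<le> (LBINT a:{0<..}. \<beta> a * exp (- \<mu> * a) * \<phi> a)"
proof -
  show ?thesis unfolding set_lebesgue_integral_def
    by (rule integral_nonneg_AE) (use k_nonneg_ae assms(1) in \<open>auto simp: indicator_def elim!: eventually_mono\<close>)
qed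

lemma lin3:
  assumes "\<And>a. \<bar>\<phi>1 a\<bar> \<le> C1" and [measurable]: "\<phi>1 \<in> borel_measurable borel"
    and "\<And>a. \<bar>\<phi>2 a\<bar> \<le> C2" and [measurable]: "\<phi>2 \<in> borel_measurable borel"
  shows "(LBINT a:{0<..}. \<beta> a * exp (- \<mu> * a) * (c1 * \<phi>1 a + c2 * \<phi>2 a + c3)) =
    c1 * (LBINT a:{0<..}. \<beta> a * exp (- \<mu> * a) * \<phi>1 a) + c2 * (LBINT a:{0<..}. \<beta> a * exp (- \<mu> * a) * \<phi>2 a) + c3"
proof -
  have i1: "set_integrable lborel {0<..} (\<lambda>a. c1 * (\<beta> a * exp (- \<mu> * a) * \<phi>1 a))"
    using kphi_int0[OF assms(1,2)] by (rule set_integrable_mult_right)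
  have i2: "set_integrable lborel {0<..} (\<lambda>a. c2 * (\<beta> a * exp (- \<mu> * a) * \<phi>2 a))"
    using kphi_int0[OF assms(3,4)] by (rule set_integrable_mult_right)
  have i3: "set_integrable lborel {0<..} (\<lambda>a. c3 * (\<beta> a * exp (- \<mu> * a)))"
    using k_int by (rule set_integrable_mult_right)
  have "(\<lambda>a. \<beta> a * exp (- \<mu> * a) * (c1 * \<phi>1 a + c2 * \<phi>2 a + c3)) =
     (\<lambda>a. c1 * (\<beta> a * exp (- \<mu> * a) * \<phi>1 a) + c2 * (\<beta> a * exp (- \<mu> * a) * \<phi>2 a) + c3 * (\<beta> a * exp (- \<mu> * a)))"
    by (auto simp: fun_eq_iff algebra_simps)
  then have "(LBINT a:{0<..}. \<beta> a * exp (- \<mu> * a) * (c1 * \<phi>1 a + c2 * \<phi>2 a + c3)) =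
    (LBINT a:{0<..}. c1 * (\<beta> a * exp (- \<mu> * a) * \<phi>1 a) + c2 * (\<beta> a * exp (- \<mu> * a) * \<phi>2 a)) +
    (LBINT a:{0<..}. c3 * (\<beta> a * exp (- \<mu> * a)))"
    using set_integral_add(2)[OF set_integral_add(1)[OF i1 i2] i3] by simp
  also have "\<dots> = c1 * (LBINT a:{0<..}. \<beta> a * exp (- \<mu> * a) * \<phi>1 a) + c2 * (LBINT a:{0<..}. \<beta> a * exp (- \<mu> * a) * \<phi>2 a) + c3"
    using set_integral_add(2)[OF i1 i2] int1 by simp
  finally show ?thesis .
qed

lemma xr_nonneg: "0 \<le> xr r"
  unfolding xr_def by (rule kphi_nonneg[OF B_nonneg B_abs]) measurable

lemma jensen: "g_fun (xr r) \<le> (LBINT \<sigma>:{0<..}. \<beta> \<sigma> * exp (- \<mu> * \<sigma>) * G (r - \<sigma>))"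
proof -
  define P where "P \<sigma> = B (r - \<sigma>)" for \<sigma>
  define Q where "Q \<sigma> = (P \<sigma>)\<^sup>2" for \<sigma>
  have Pm [measurable]: "P \<in> borel_measurable borel" unfolding P_def by measurable
  have Qm [measurable]: "Q \<in> borel_measurable borel" unfolding Q_def by measurable
  have Pb: "\<bar>P \<sigma>\<bar> \<le> Bmax" for \<sigma> unfolding P_def by (rule B_abs)
  have Qb: "\<bar>Q \<sigma>\<bar> \<le> Bmax\<^sup>2" for \<sigma>
  proof -
    have "\<bar>P \<sigma>\<bar>\<^sup>2 \<le> Bmax\<^sup>2" using Pb[of \<sigma>] by (intro power_mono) auto
    then show ?thesis unfolding Q_def by simp
  qed
  define x where "x = xr r"
  have x: "(LBINT a:{0<..}. \<beta> a * exp (- \<mu> * a) * P a) = x" unfolding x_def xr_def P_def ..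
  define IQ where "IQ = (LBINT a:{0<..}. \<beta> a * exp (- \<mu> * a) * Q a)"
  have "(\<lambda>\<sigma>. \<beta> \<sigma> * exp (- \<mu> * \<sigma>) * G (r - \<sigma>)) = (\<lambda>\<sigma>. \<beta> \<sigma> * exp (- \<mu> * \<sigma>) * (1 * Q \<sigma> + (-2) * P \<sigma> + 1))"
    by (auto simp: fun_eq_iff G_def g_fun_def Q_def P_def power2_eq_square algebra_simps)
  then have eG: "(LBINT \<sigma>:{0<..}. \<beta> \<sigma> * exp (- \<mu> * \<sigma>) * G (r - \<sigma>)) = IQ - 2 * x + 1"
    using lin3[OF Qb Qm Pb Pm, of 1 "-2" 1] x unfolding IQ_def by simp
  have "(\<lambda>\<sigma>. \<beta> \<sigma> * exp (- \<mu> * \<sigma>) * (P \<sigma> - x)\<^sup>2) = (\<lambda>\<sigma>. \<beta> \<sigma> * exp (- \<mu> * \<sigma>) * (1 * Q \<sigma> + (-2 * x) * P \<sigma> + x\<^sup>2))"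
    by (auto simp: fun_eq_iff Q_def power2_eq_square algebra_simps)
  then have eD: "(LBINT \<sigma>:{0<..}. \<beta> \<sigma> * exp (- \<mu> * \<sigma>) * (P \<sigma> - x)\<^sup>2) = IQ - 2 * x * x + x\<^sup>2"
    using lin3[OF Qb Qm Pb Pm, of 1 "-2 * x" "x\<^sup>2"] x unfolding IQ_def by simp
  have "0 \<le> (LBINT \<sigma>:{0<..}. \<beta> \<sigma> * exp (- \<mu> * \<sigma>) * (P \<sigma> - x)\<^sup>2)"
  proof (rule kphi_nonneg)
    show "\<bar>(P \<sigma> - x)\<^sup>2\<bar> \<le> (Bmax + \<bar>x\<bar>)\<^sup>2" for \<sigma>
    proof -
      have "\<bar>P \<sigma> - x\<bar> \<le> Bmax + \<bar>x\<bar>" using Pb[of \<sigma>] by linarith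
      then have "\<bar>P \<sigma> - x\<bar>\<^sup>2 \<le> (Bmax + \<bar>x\<bar>)\<^sup>2" by (intro power_mono) auto
      then show ?thesis by simp
    qed
  qed auto
  then show ?thesis unfolding eG using eD unfolding x_def[symmetric] g_fun_def
    by (simp add: power2_eq_square algebra_simps)
qed


definition Kn :: "real \<Rightarrow> ennreal" where
  "Kn \<sigma> = ennreal (\<beta> \<sigma> * exp (- \<mu> * \<sigma>)) * indicator {0<..} \<sigma>"

definition J :: "real \<Rightarrow> real \<Rightarrow> ennreal" where
  "J p q = (\<integral>\<^sup>+ r. indicator {p..<q} r * ennreal (G r) \<partial>lborel)"

lemma Kn_meas [measurable]: "Kn \<in> borel_measurable borel" unfolding Kn_def by measurable

lemma nn_set_k:
  assumes [measurable]: "A \<in> sets borel" and A: "A \<subseteq> {0<..}"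
  shows "(\<integral>\<^sup>+ \<sigma>. ennreal (\<beta> \<sigma> * exp (- \<mu> * \<sigma>)) * indicator A \<sigma> \<partial>lborel) = ennreal (LBINT \<sigma>:A. \<beta> \<sigma> * exp (- \<mu> * \<sigma>))"
proof -
  have int: "integrable lborel (\<lambda>\<sigma>. indicator A \<sigma> *\<^sub>R (\<beta> \<sigma> * exp (- \<mu> * \<sigma>)))"
    using set_integrable_subset[OF k_int _ A] unfolding set_integrable_def by simp
  have nn: "AE \<sigma> in lborel. 0 \<le> indicator A \<sigma> *\<^sub>R (\<beta> \<sigma> * exp (- \<mu> * \<sigma>))"
    using k_nonneg_ae by eventually_elim (use A in \<open>auto simp: indicator_def\<close>)
  have "(\<integral>\<^sup>+ \<sigma>. ennreal (\<beta> \<sigma> * exp (- \<mu> * \<sigma>)) * indicator A \<sigma> \<partial>lborel) =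
     (\<integral>\<^sup>+ \<sigma>. ennreal (indicator A \<sigma> *\<^sub>R (\<beta> \<sigma> * exp (- \<mu> * \<sigma>))) \<partial>lborel)"
    by (rule nn_integral_cong) (auto simp: indicator_def)
  also have "\<dots> = ennreal (LBINT \<sigma>:A. \<beta> \<sigma> * exp (- \<mu> * \<sigma>))"
    unfolding set_lebesgue_integral_def by (rule nn_integral_eq_integral[OF int nn])
  finally show ?thesis .
qed

lemma Kn_int: "(\<integral>\<^sup>+ \<sigma>. Kn \<sigma> \<partial>lborel) = 1"
  unfolding Kn_def using nn_set_k[of "{0<..}"] int1 by simp

lemma gamma_nn:
  assumes a: "0 < a"
  shows "ennreal (gamma_fun \<beta> \<mu> a) = (\<integral>\<^sup>+ \<sigma>. Kn \<sigma> * indicator {a..} \<sigma> \<partial>lborel)"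
proof -
  have "(\<integral>\<^sup>+ \<sigma>. Kn \<sigma> * indicator {a..} \<sigma> \<partial>lborel) = (\<integral>\<^sup>+ \<sigma>. ennreal (\<beta> \<sigma> * exp (- \<mu> * \<sigma>)) * indicator {a..} \<sigma> \<partial>lborel)"
    by (rule nn_integral_cong) (use a in \<open>auto simp: Kn_def indicator_def\<close>)
  also have "\<dots> = ennreal (gamma_fun \<beta> \<mu> a)"
    unfolding gamma_fun_def by (rule nn_set_k) (use a in auto)
  finally show ?thesis ..
qed

lemma gamma_nonneg:
  assumes a: "0 < a"
  shows "0 \<le> gamma_fun \<beta> \<mu> a"
  unfolding gamma_fun_def set_lebesgue_integral_def
  by (rule integral_nonneg_AE) (use k_nonneg_ae a in \<open>auto simp: indicator_def elim!: eventually_mono\<close>)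

lemma J_shift: "(\<integral>\<^sup>+ a. indicator {0<..\<sigma>} a * ennreal (G (t - a)) \<partial>lborel) = J (t - \<sigma>) t"
proof -
  have "J (t - \<sigma>) t = (\<integral>\<^sup>+ a. indicator {t - \<sigma>..<t} (t + (- 1) * a) * ennreal (G (t + (- 1) * a)) \<partial>lborel)"
    unfolding J_def using nn_integral_real_affine[of "\<lambda>r. indicator {t - \<sigma>..<t} r * ennreal (G r)" "- 1" t] by simp
  also have "\<dots> = (\<integral>\<^sup>+ a. indicator {0<..\<sigma>} a * ennreal (G (t - a)) \<partial>lborel)"
    by (auto intro!: nn_integral_cong simp: indicator_def)
  finally show ?thesis ..
qed

lemma J_shift2: "(\<integral>\<^sup>+ r. indicator {t..<t + s} r * ennreal (G (r - \<sigma>)) \<partial>lborel) = J (t - \<sigma>) (t + s - \<sigma>)"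
proof -
  have "J (t - \<sigma>) (t + s - \<sigma>) = (\<integral>\<^sup>+ a. indicator {t - \<sigma>..<t + s - \<sigma>} (- \<sigma> + 1 * a) * ennreal (G (- \<sigma> + 1 * a)) \<partial>lborel)"
    unfolding J_def using nn_integral_real_affine[of "\<lambda>r. indicator {t - \<sigma>..<t + s - \<sigma>} r * ennreal (G r)" 1 "- \<sigma>"] by simp
  also have "\<dots> = (\<integral>\<^sup>+ r. indicator {t..<t + s} r * ennreal (G (r - \<sigma>)) \<partial>lborel)"
    by (auto intro!: nn_integral_cong simp: indicator_def)
  finally show ?thesis ..
qed

lemma V_rep: "V_fun \<beta> \<mu> \<alpha> (u t) = (\<integral>\<^sup>+ \<sigma>. Kn \<sigma> * J (t - \<sigma>) t \<partial>lborel)"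
proof -
  have "V_fun \<beta> \<mu> \<alpha> (u t) = (\<integral>\<^sup>+ a. ennreal (gamma_fun \<beta> \<mu> a) * ennreal (G (t - a)) * indicator {0<..} a \<partial>lborel)"
    unfolding V_fun_def
  proof (rule nn_integral_cong_AE)
    show "AE a in lborel. ennreal (gamma_fun \<beta> \<mu> a * g_fun (u t a / ubar \<alpha> \<mu> a)) * indicator {0<..} a =
        ennreal (gamma_fun \<beta> \<mu> a) * ennreal (G (t - a)) * indicator {0<..} a"
      using rep[of t]
    proof eventually_elim
      case (elim a)
      show ?case
      proof (cases "0 < a")
        case True
        then have "u t a / ubar \<alpha> \<mu> a = B (t - a)"
          using elim L_pos unfolding ubar_def B_def L_def[symmetric] by simp
        then show ?thesis using True gamma_nonneg[OF True] G_nonneg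
          by (simp add: G_def ennreal_mult)
      qed simp
    qed
  qed
  also have "\<dots> = (\<integral>\<^sup>+ a. \<integral>\<^sup>+ \<sigma>. Kn \<sigma> * indicator {a..} \<sigma> * ennreal (G (t - a)) * indicator {0<..} a \<partial>lborel \<partial>lborel)"
  proof (rule nn_integral_cong)
    fix a
    show "ennreal (gamma_fun \<beta> \<mu> a) * ennreal (G (t - a)) * indicator {0<..} a =
      (\<integral>\<^sup>+ \<sigma>. Kn \<sigma> * indicator {a..} \<sigma> * ennreal (G (t - a)) * indicator {0<..} a \<partial>lborel)"
    proof (cases "0 < a")
      case True
      then show ?thesis using gamma_nn[OF True]
        by (simp add: nn_integral_multc)
    qed simp
  qed
  also have "\<dots> = (\<integral>\<^sup>+ \<sigma>. \<integral>\<^sup>+ a. Kn \<sigma> * indicator {a..} \<sigma> * ennreal (G (t - a)) * indicator {0<..} a \<partial>lborel \<partial>lborel)"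
  proof (rule lborel_pair.Fubini')
    show "(\<lambda>(\<sigma>, a). Kn \<sigma> * indicator {a..} \<sigma> * ennreal (G (t - a)) * indicator {0<..} a) \<in> borel_measurable (lborel \<Otimes>\<^sub>M lborel)"
    proof -
      have "(\<lambda>(\<sigma>, a). Kn \<sigma> * indicator {a..} \<sigma> * ennreal (G (t - a)) * indicator {0<..} a) =
        (\<lambda>(\<sigma>, a). Kn \<sigma> * (if a \<le> \<sigma> then 1 else 0) * ennreal (G (t - a)) * indicator {0<..} a)"
        by (auto simp: fun_eq_iff indicator_def)
      moreover have "(\<lambda>(\<sigma>, a). Kn \<sigma> * (if a \<le> \<sigma> then 1 else 0) * ennreal (G (t - a)) * indicator {0<..} a) \<in> borel_measurable (lborel \<Otimes>\<^sub>M lborel)"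
        by measurable
      ultimately show ?thesis by simp
    qed
  qed
  also have "\<dots> = (\<integral>\<^sup>+ \<sigma>. Kn \<sigma> * J (t - \<sigma>) t \<partial>lborel)"
  proof (rule nn_integral_cong)
    fix \<sigma>
    have "(\<integral>\<^sup>+ a. Kn \<sigma> * indicator {a..} \<sigma> * ennreal (G (t - a)) * indicator {0<..} a \<partial>lborel)
       = (\<integral>\<^sup>+ a. Kn \<sigma> * (indicator {0<..\<sigma>} a * ennreal (G (t - a))) \<partial>lborel)"
      by (rule nn_integral_cong) (auto simp: indicator_def)
    also have "\<dots> = Kn \<sigma> * J (t - \<sigma>) t"
      by (subst nn_integral_cmult) (auto simp: J_shift)
    finally show "(\<integral>\<^sup>+ a. Kn \<sigma> * indicator {a..} \<sigma> * ennreal (G (t - a)) * indicator {0<..} a \<partial>lborel) = Kn \<sigma> * J (t - \<sigma>) t" .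
  qed
  finally show ?thesis .
qed


lemma J_alt: "J p q = (\<integral>\<^sup>+ r. (if p \<le> r \<and> r < q then 1 else 0) * ennreal (G r) \<partial>lborel)"
  unfolding J_def by (rule nn_integral_cong) (auto simp: indicator_def)

lemma J_meas [measurable]:
  fixes f g :: "real \<Rightarrow> real"
  assumes [measurable]: "f \<in> borel_measurable borel" "g \<in> borel_measurable borel"
  shows "(\<lambda>\<sigma>. J (f \<sigma>) (g \<sigma>)) \<in> borel_measurable borel"
proof -
  have "(\<lambda>\<sigma>. \<integral>\<^sup>+ r. (if f \<sigma> \<le> r \<and> r < g \<sigma> then 1 else 0) * ennreal (G r) \<partial>lborel) \<in> borel_measurable lborel"
    by (rule lborel.borel_measurable_nn_integral) measurable
  then show ?thesis unfolding J_alt by simp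
qed

lemma J_add:
  assumes "p \<le> q" "q \<le> w"
  shows "J p q + J q w = J p w"
proof -
  have "J p q + J q w = (\<integral>\<^sup>+ r. indicator {p..<q} r * ennreal (G r) + indicator {q..<w} r * ennreal (G r) \<partial>lborel)"
    unfolding J_def by (rule nn_integral_add[symmetric]) auto
  also have "\<dots> = J p w" unfolding J_def
    by (rule nn_integral_cong) (use assms in \<open>auto simp: indicator_def\<close>)
  finally show ?thesis .
qed

lemma J_le: "p \<le> q \<Longrightarrow> J p q \<le> ennreal Gm * ennreal (q - p)"
proof -
  assume pq: "p \<le> q"
  have "J p q \<le> (\<integral>\<^sup>+ r. ennreal Gm * indicator {p..<q} r \<partial>lborel)"
    unfolding J_def by (rule nn_integral_mono) (auto simp: indicator_def intro!: ennreal_leI G_le)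
  also have "\<dots> = ennreal Gm * ennreal (q - p)" using pq by (simp add: nn_integral_cmult_indicator)
  finally show ?thesis .
qed

definition KG :: "real \<Rightarrow> ennreal" where
  "KG r = (\<integral>\<^sup>+ \<sigma>. Kn \<sigma> * ennreal (G (r - \<sigma>)) \<partial>lborel)"

lemma KG_meas [measurable]: "KG \<in> borel_measurable borel"
proof -
  have "(\<lambda>r. \<integral>\<^sup>+ \<sigma>. Kn \<sigma> * ennreal (G (r - \<sigma>)) \<partial>lborel) \<in> borel_measurable lborel"
    by (rule lborel.borel_measurable_nn_integral) measurable
  then show ?thesis unfolding KG_def[abs_def] by simp
qed

lemma KG_real: "KG r = ennreal (LBINT \<sigma>:{0<..}. \<beta> \<sigma> * exp (- \<mu> * \<sigma>) * G (r - \<sigma>))"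
proof -
  have int: "integrable lborel (\<lambda>\<sigma>. indicator {0<..} \<sigma> *\<^sub>R (\<beta> \<sigma> * exp (- \<mu> * \<sigma>) * G (r - \<sigma>)))"
    using kphi_int0[OF G_abs, of "\<lambda>\<sigma>. r - \<sigma>"] unfolding set_integrable_def by simp
  have nn: "AE \<sigma> in lborel. 0 \<le> indicator {0<..} \<sigma> *\<^sub>R (\<beta> \<sigma> * exp (- \<mu> * \<sigma>) * G (r - \<sigma>))"
    using k_nonneg_ae by eventually_elim (auto simp: indicator_def G_nonneg)
  have "KG r = (\<integral>\<^sup>+ \<sigma>. ennreal (indicator {0<..} \<sigma> *\<^sub>R (\<beta> \<sigma> * exp (- \<mu> * \<sigma>) * G (r - \<sigma>))) \<partial>lborel)"
    unfolding KG_def Kn_def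
  proof (rule nn_integral_cong_AE)
    show "AE x in lborel. ennreal (\<beta> x * exp (- \<mu> * x)) * indicator {0<..} x * ennreal (G (r - x)) =
         ennreal (indicator {0<..} x *\<^sub>R (\<beta> x * exp (- \<mu> * x) * G (r - x)))"
      using k_nonneg_ae by eventually_elim (auto simp: indicator_def G_nonneg ennreal_mult)
  qed
  also have "\<dots> = ennreal (LBINT \<sigma>:{0<..}. \<beta> \<sigma> * exp (- \<mu> * \<sigma>) * G (r - \<sigma>))"
    unfolding set_lebesgue_integral_def by (rule nn_integral_eq_integral[OF int nn])
  finally show ?thesis .
qed

lemma KG_ge: "ennreal (G r) \<le> KG r"
proof -
  have "G r = g_fun (hfun L (xr r))" unfolding G_def B_eq ..
  also have "\<dots> \<le> g_fun (xr r)" by (rule h_le[OF L_pos L_le2 xr_nonneg])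
  also have "\<dots> \<le> (LBINT \<sigma>:{0<..}. \<beta> \<sigma> * exp (- \<mu> * \<sigma>) * G (r - \<sigma>))" by (rule jensen)
  finally show ?thesis unfolding KG_real by (rule ennreal_leI)
qed

lemma KG_le: "KG r \<le> ennreal Gm"
proof -
  have "KG r \<le> (\<integral>\<^sup>+ \<sigma>. Kn \<sigma> * ennreal Gm \<partial>lborel)"
    unfolding KG_def by (rule nn_integral_mono) (auto intro!: mult_left_mono ennreal_leI G_le)
  also have "\<dots> = ennreal Gm" by (simp add: nn_integral_multc Kn_int)
  finally show ?thesis .
qed

definition KGint :: "real \<Rightarrow> real \<Rightarrow> ennreal" where
  "KGint t s = (\<integral>\<^sup>+ r. indicator {t..<t + s} r * KG r \<partial>lborel)"

lemma KGint_fin: "0 \<le> s \<Longrightarrow> KGint t s \<noteq> \<infinity>"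
proof -
  assume s: "0 \<le> s"
  have "KGint t s \<le> (\<integral>\<^sup>+ r. ennreal Gm * indicator {t..<t + s} r \<partial>lborel)"
    unfolding KGint_def by (rule nn_integral_mono) (auto simp: indicator_def KG_le)
  also have "\<dots> = ennreal Gm * ennreal s" using s by (simp add: nn_integral_cmult_indicator)
  finally have le: "KGint t s \<le> ennreal Gm * ennreal s" .
  have "ennreal Gm * ennreal s \<noteq> \<infinity>" by (simp add: ennreal_mult_eq_top_iff)
  then show ?thesis using le by (metis infinity_ennreal_def neq_top_trans)
qed

lemma KGint_rep: "KGint t s = (\<integral>\<^sup>+ \<sigma>. Kn \<sigma> * J (t - \<sigma>) (t + s - \<sigma>) \<partial>lborel)"
proof -
  have "KGint t s = (\<integral>\<^sup>+ r. \<integral>\<^sup>+ \<sigma>. indicator {t..<t + s} r * (Kn \<sigma> * ennreal (G (r - \<sigma>))) \<partial>lborel \<partial>lborel)"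
    unfolding KGint_def KG_def by (rule nn_integral_cong) (simp add: nn_integral_cmult)
  also have "\<dots> = (\<integral>\<^sup>+ \<sigma>. \<integral>\<^sup>+ r. indicator {t..<t + s} r * (Kn \<sigma> * ennreal (G (r - \<sigma>))) \<partial>lborel \<partial>lborel)"
    by (rule lborel_pair.Fubini') measurable
  also have "\<dots> = (\<integral>\<^sup>+ \<sigma>. Kn \<sigma> * J (t - \<sigma>) (t + s - \<sigma>) \<partial>lborel)"
  proof (rule nn_integral_cong)
    fix \<sigma>
    have "(\<integral>\<^sup>+ r. indicator {t..<t + s} r * (Kn \<sigma> * ennreal (G (r - \<sigma>))) \<partial>lborel) =
       (\<integral>\<^sup>+ r. Kn \<sigma> * (indicator {t..<t + s} r * ennreal (G (r - \<sigma>))) \<partial>lborel)"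
      by (rule nn_integral_cong) (simp add: mult_ac)
    also have "\<dots> = Kn \<sigma> * J (t - \<sigma>) (t + s - \<sigma>)"
      by (subst nn_integral_cmult) (auto simp: J_shift2)
    finally show "(\<integral>\<^sup>+ r. indicator {t..<t + s} r * (Kn \<sigma> * ennreal (G (r - \<sigma>))) \<partial>lborel) = Kn \<sigma> * J (t - \<sigma>) (t + s - \<sigma>)" .
  qed
  finally show ?thesis .
qed

lemma identity:
  assumes s: "0 \<le> s"
  shows "V_fun \<beta> \<mu> \<alpha> (u (t + s)) + KGint t s = V_fun \<beta> \<mu> \<alpha> (u t) + J t (t + s)"
proof -
  have "V_fun \<beta> \<mu> \<alpha> (u (t + s)) + KGint t s =
     (\<integral>\<^sup>+ \<sigma>. Kn \<sigma> * J (t + s - \<sigma>) (t + s) + Kn \<sigma> * J (t - \<sigma>) (t + s - \<sigma>) \<partial>lborel)"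
    unfolding V_rep KGint_rep by (rule nn_integral_add[symmetric]) auto
  also have "\<dots> = (\<integral>\<^sup>+ \<sigma>. Kn \<sigma> * J (t - \<sigma>) (t + s) \<partial>lborel)"
  proof (rule nn_integral_cong)
    fix \<sigma>
    show "Kn \<sigma> * J (t + s - \<sigma>) (t + s) + Kn \<sigma> * J (t - \<sigma>) (t + s - \<sigma>) = Kn \<sigma> * J (t - \<sigma>) (t + s)"
    proof (cases "0 < \<sigma>")
      case True
      have "J (t - \<sigma>) (t + s - \<sigma>) + J (t + s - \<sigma>) (t + s) = J (t - \<sigma>) (t + s)"
        by (rule J_add) (use s True in auto)
      then show ?thesis by (metis add.commute distrib_left)
    qed (simp add: Kn_def)
  qed
  also have "\<dots> = (\<integral>\<^sup>+ \<sigma>. Kn \<sigma> * J (t - \<sigma>) t + Kn \<sigma> * J t (t + s) \<partial>lborel)"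
  proof (rule nn_integral_cong)
    fix \<sigma>
    show "Kn \<sigma> * J (t - \<sigma>) (t + s) = Kn \<sigma> * J (t - \<sigma>) t + Kn \<sigma> * J t (t + s)"
    proof (cases "0 < \<sigma>")
      case True
      have "J (t - \<sigma>) t + J t (t + s) = J (t - \<sigma>) (t + s)"
        by (rule J_add) (use s True in auto)
      then show ?thesis by (metis distrib_left)
    qed (simp add: Kn_def)
  qed
  also have "\<dots> = V_fun \<beta> \<mu> \<alpha> (u t) + (\<integral>\<^sup>+ \<sigma>. Kn \<sigma> * J t (t + s) \<partial>lborel)"
    unfolding V_rep by (rule nn_integral_add) auto
  also have "(\<integral>\<^sup>+ \<sigma>. Kn \<sigma> * J t (t + s) \<partial>lborel) = J t (t + s)"
    by (simp add: nn_integral_multc Kn_int)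
  finally show ?thesis .
qed

lemma J_le_KGint: "J t (t + s) \<le> KGint t s"
  unfolding J_def KGint_def by (rule nn_integral_mono) (auto intro!: mult_left_mono KG_ge)

lemma V_mono:
  assumes s: "0 \<le> s"
  shows "V_fun \<beta> \<mu> \<alpha> (u (t + s)) \<le> V_fun \<beta> \<mu> \<alpha> (u t)"
proof -
  have "V_fun \<beta> \<mu> \<alpha> (u (t + s)) + KGint t s \<le> V_fun \<beta> \<mu> \<alpha> (u t) + KGint t s"
    unfolding identity[OF s] by (intro add_left_mono J_le_KGint)
  then show ?thesis using KGint_fin[OF s] by (simp add: add.commute ennreal_add_left_cancel_le)
qed


lemma exp_mom: "(\<integral>\<^sup>+ \<sigma>. ennreal (\<sigma> * exp (- \<mu> * \<sigma>)) * indicator {0<..} \<sigma> \<partial>lborel) \<noteq> \<infinity>"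
proof -
  define Y where "Y = (\<integral>\<^sup>+ \<sigma>. ennreal ((0 + \<mu> * \<sigma>) ^ 1 * exp (- (0 + \<mu> * \<sigma>))) * indicator {0..} (0 + \<mu> * \<sigma>) \<partial>lborel)"
  have "(\<integral>\<^sup>+ x. ennreal (x ^ 1 * exp (- x)) * indicator {0..} x \<partial>lborel) = ennreal \<bar>\<mu>\<bar> * Y"
    unfolding Y_def by (rule nn_integral_real_affine) (use mu in auto)
  then have "ennreal \<mu> * Y = 1" using nn_intergal_power_times_exp_Ici[of 1] mu by simp
  then have Yf: "Y \<noteq> \<infinity>" using mu by (auto simp: ennreal_mult_eq_top_iff)
  have "(\<integral>\<^sup>+ \<sigma>. ennreal (\<sigma> * exp (- \<mu> * \<sigma>)) * indicator {0<..} \<sigma> \<partial>lborel)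
     \<le> (\<integral>\<^sup>+ \<sigma>. ennreal (1 / \<mu>) * (ennreal ((0 + \<mu> * \<sigma>) ^ 1 * exp (- (0 + \<mu> * \<sigma>))) * indicator {0..} (0 + \<mu> * \<sigma>)) \<partial>lborel)"
  proof (rule nn_integral_mono)
    fix \<sigma> :: real
    show "ennreal (\<sigma> * exp (- \<mu> * \<sigma>)) * indicator {0<..} \<sigma> \<le> ennreal (1 / \<mu>) * (ennreal ((0 + \<mu> * \<sigma>) ^ 1 * exp (- (0 + \<mu> * \<sigma>))) * indicator {0..} (0 + \<mu> * \<sigma>))"
    proof (cases "0 < \<sigma>")
      case True
      have "ennreal (1 / \<mu>) * ennreal (\<mu> * \<sigma> * exp (- (\<mu> * \<sigma>))) = ennreal (1 / \<mu> * (\<mu> * \<sigma> * exp (- (\<mu> * \<sigma>))))"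
        by (rule ennreal_mult[symmetric]) (use mu True in auto)
      also have "\<dots> = ennreal (\<sigma> * exp (- \<mu> * \<sigma>))" using mu by simp
      finally show ?thesis using True mu by simp
    qed simp
  qed
  also have "\<dots> = ennreal (1 / \<mu>) * Y" unfolding Y_def by (rule nn_integral_cmult) measurable
  finally show ?thesis using Yf by (metis ennreal_mult_eq_top_iff ennreal_neq_top infinity_ennreal_def neq_top_trans)
qed

lemma V_fin: "V_fun \<beta> \<mu> \<alpha> (u t) \<noteq> \<infinity>"
proof -
  define C where "C = max M 0 * Gm"
  have C: "0 \<le> C" unfolding C_def Gm_def by simp
  have "V_fun \<beta> \<mu> \<alpha> (u t) \<le> (\<integral>\<^sup>+ \<sigma>. ennreal C * (ennreal (\<sigma> * exp (- \<mu> * \<sigma>)) * indicator {0<..} \<sigma>) \<partial>lborel)"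
    unfolding V_rep
  proof (rule nn_integral_mono_AE)
    show "AE \<sigma> in lborel. Kn \<sigma> * J (t - \<sigma>) t \<le> ennreal C * (ennreal (\<sigma> * exp (- \<mu> * \<sigma>)) * indicator {0<..} \<sigma>)"
      using bM
    proof eventually_elim
      case (elim \<sigma>)
      show ?case
      proof (cases "0 < \<sigma>")
        case True
        have k: "Kn \<sigma> \<le> ennreal (max M 0 * exp (- \<mu> * \<sigma>))"
          unfolding Kn_def using True elim by (auto intro!: ennreal_leI mult_right_mono)
        have j: "J (t - \<sigma>) t \<le> ennreal Gm * ennreal \<sigma>" using J_le[of "t - \<sigma>" t] True by simp
        have "Kn \<sigma> * J (t - \<sigma>) t \<le> ennreal (max M 0 * exp (- \<mu> * \<sigma>)) * (ennreal Gm * ennreal \<sigma>)"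
          by (rule mult_mono[OF k j]) auto
        also have "\<dots> = ennreal C * ennreal (\<sigma> * exp (- \<mu> * \<sigma>))"
          unfolding C_def using True by (simp add: ennreal_mult[symmetric] Gm_def mult_ac)
        finally show ?thesis using True by simp
      qed (simp add: Kn_def)
    qed
  qed
  also have "\<dots> = ennreal C * (\<integral>\<^sup>+ \<sigma>. ennreal (\<sigma> * exp (- \<mu> * \<sigma>)) * indicator {0<..} \<sigma> \<partial>lborel)"
    by (rule nn_integral_cmult) measurable
  finally show ?thesis using exp_mom
    by (metis ennreal_mult_eq_top_iff ennreal_neq_top infinity_ennreal_def neq_top_trans)
qed

lemma B01_ae:
  assumes const: "\<forall>t. V_fun \<beta> \<mu> \<alpha> (u t) = c"
  shows "AE r in lborel. B r * (B r - 1) = 0"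
proof -
  have loc: "AE r in lborel. r \<in> {t..<t + s} \<longrightarrow> B r * (B r - 1) = 0" if s: "0 \<le> s" for t s
  proof -
    have "c + KGint t s = c + J t (t + s)" using identity[OF s, of t] const by simp
    moreover have "c \<noteq> \<infinity>" using V_fin[of t] const by simp
    ultimately have eq: "KGint t s = J t (t + s)" by (simp add: ennreal_add_left_cancel)
    have "(\<integral>\<^sup>+ r. indicator {t..<t + s} r * KG r - indicator {t..<t + s} r * ennreal (G r) \<partial>lborel) = KGint t s - J t (t + s)"
      unfolding KGint_def J_def
    proof (rule nn_integral_diff)
      show "(\<integral>\<^sup>+ r. indicator {t..<t + s} r * ennreal (G r) \<partial>lborel) \<noteq> \<infinity>"
        using KGint_fin[OF s] eq J_def by metis
      show "AE x in lborel. indicator {t..<t + s} x * ennreal (G x) \<le> indicator {t..<t + s} x * KG x"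
        by (auto intro!: mult_left_mono KG_ge)
    qed auto
    also have "\<dots> = 0"
    proof -
      have "J t (t + s) < top" using eq KGint_fin[OF s, of t] by (simp add: less_top)
      then show ?thesis using eq by (simp add: diff_eq_0_iff_ennreal)
    qed
    finally have "AE r in lborel. indicator {t..<t + s} r * KG r - indicator {t..<t + s} r * ennreal (G r) = 0"
      by (subst (asm) nn_integral_0_iff_AE) auto
    then show ?thesis
    proof eventually_elim
      case (elim r)
      show ?case
      proof
        assume r: "r \<in> {t..<t + s}"
        then have "KG r \<le> ennreal (G r)" using elim by (simp add: diff_eq_0_iff_ennreal)
        then have le: "(LBINT \<sigma>:{0<..}. \<beta> \<sigma> * exp (- \<mu> * \<sigma>) * G (r - \<sigma>)) \<le> G r"
          unfolding KG_real using G_nonneg by (simp add: ennreal_le_iff)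
        have "G r = g_fun (hfun L (xr r))" unfolding G_def B_eq ..
        then have "g_fun (xr r) \<le> g_fun (hfun L (xr r))" using jensen[of r] le by simp
        then have x01: "xr r = 0 \<or> xr r = 1" using h_strict[OF L_pos L_le2 xr_nonneg] by fastforce
        show "B r * (B r - 1) = 0" unfolding B_eq using x01 by (auto simp: hfun_def)
      qed
    qed
  qed
  have "AE r in lborel. \<forall>n::nat. r \<in> {- real n..<- real n + 2 * real n} \<longrightarrow> B r * (B r - 1) = 0"
  proof (subst AE_all_countable, intro allI)
    fix n :: nat
    show "AE r in lborel. r \<in> {- real n..<- real n + 2 * real n} \<longrightarrow> B r * (B r - 1) = 0"
      by (rule loc) simp
  qed
  then show ?thesis
  proof eventually_elim
    case (elim r)
    obtain n :: nat where n: "\<bar>r\<bar> < real n" using reals_Archimedean2 by blast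
    then have "r \<in> {- real n..<- real n + 2 * real n}" by auto
    then show ?case using elim[rule_format, of n] by blast
  qed
qed

lemma B01:
  assumes const: "\<forall>t. V_fun \<beta> \<mu> \<alpha> (u t) = c"
  shows "(\<forall>r. B r = 1)"
proof -
  have all: "B r * (B r - 1) = 0" for r
  proof -
    have "B r * (B r - 1) = (\<lambda>_. 0) r"
      by (rule AE_cont_eq[of UNIV]) (use B01_ae[OF const] in \<open>auto intro!: continuous_intros B_cont\<close>)
    then show ?thesis by simp
  qed
  then have b01: "B r = 0 \<or> B r = 1" for r by (metis eq_iff_diff_eq_0 mult_eq_0_iff)
  have not0: "\<not> (\<forall>r. B r = 0)"
  proof
    assume z: "\<forall>r. B r = 0"
    have "AE a in lborel. 0 < a \<longrightarrow> u 0 a = 0"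
      using rep[of 0] by eventually_elim (use z L_pos in \<open>auto simp: B_def\<close>)
    then have "(LBINT a:{a. 0 < a \<and> ereal a < astar \<beta> \<mu>}. u 0 a) = 0"
      unfolding set_lebesgue_integral_def by (intro integral_eq_zero_AE) (auto elim!: eventually_mono simp: indicator_def)
    then show False using gb gm by (metis not_le)
  qed
  have "\<not> (\<exists>r1 r2. B r1 = 0 \<and> B r2 = 1)"
  proof
    assume "\<exists>r1 r2. B r1 = 0 \<and> B r2 = 1"
    then obtain r1 r2 where r: "B r1 = 0" "B r2 = 1" by blast
    have c: "continuous_on {a..b} B" for a b using B_cont by (rule continuous_on_subset) auto
    have "\<exists>x. B x = 1/2"
    proof (cases "r1 \<le> r2")
      case True
      then show ?thesis using IVT'[of B r1 "1/2" r2, OF _ _ True c] r by auto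
    next
      case False
      then show ?thesis using IVT2'[of B r1 "1/2" r2, OF _ _ _ c] r by auto
    qed
    then obtain x where "B x = 1/2" by blast
    then show False using b01[of x] by simp
  qed
  then show ?thesis using not0 b01 by metis
qed

lemma const_imp:
  assumes const: "\<forall>t. V_fun \<beta> \<mu> \<alpha> (u t) = c"
  shows "\<forall>t. AE a in lborel. 0 < a \<longrightarrow> u t a = ubar \<alpha> \<mu> a"
proof
  fix t
  show "AE a in lborel. 0 < a \<longrightarrow> u t a = ubar \<alpha> \<mu> a"
    using rep[of t]
  proof eventually_elim
    case (elim a)
    have "Bb (t - a) = L" using B01[OF const, rule_format, of "t - a"] L_pos by (simp add: B_def)
    then show ?case using elim unfolding ubar_def L_def by (simp add: mult.commute)
  qed
qed

end


lemma V_zero: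
  assumes a1: "1 < \<alpha>" and h: "AE a in lborel. 0 < a \<longrightarrow> v a = ubar \<alpha> \<mu> a"
  shows "V_fun \<beta> \<mu> \<alpha> v = 0"
proof -
  have "V_fun \<beta> \<mu> \<alpha> v = (\<integral>\<^sup>+ (a::real). 0 \<partial>lborel)"
    unfolding V_fun_def
  proof (rule nn_integral_cong_AE)
    show "AE a in lborel. ennreal (gamma_fun \<beta> \<mu> a * g_fun (v a / ubar \<alpha> \<mu> a)) * indicator {0<..} a = 0"
      using h
    proof eventually_elim
      case (elim a)
      show ?case
      proof (cases "0 < a")
        case True
        have "ubar \<alpha> \<mu> a \<noteq> 0" unfolding ubar_def using a1 by simp
        then show ?thesis using elim True by (simp add: g_fun_def)
      qed simp
    qed
  qed
  then show ?thesis by simp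
qed

theorem proposition6p4:
  fixes \<mu> \<alpha> \<gamma>m \<gamma>p :: real and \<beta> :: "real \<Rightarrow> real" and u :: "real \<Rightarrow> real \<Rightarrow> real"
  assumes "\<mu> > 0"
    and "1 < \<alpha>" and "\<alpha> \<le> exp 2"
    and "\<beta> \<in> borel_measurable lborel"
    and "\<exists>M. AE a in lborel. 0 < a \<longrightarrow> 0 \<le> \<beta> a \<and> \<beta> a \<le> M"
    and "(LBINT a:{0<..}. \<beta> a * exp (- \<mu> * a)) = 1"
    and "complete_orbit \<beta> \<mu> \<alpha> u"
    and "0 < \<gamma>m" and "\<gamma>m < \<gamma>p"
    and "\<forall>t. \<gamma>m \<le> (LBINT a:{a. 0 < a \<and> ereal a < astar \<beta> \<mu>}. u t a)
            \<and> (LBINT a:{a. 0 < a \<and> ereal a < astar \<beta> \<mu>}. u t a) \<le> \<gamma>p"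
  shows "antimono (\<lambda>t. V_fun \<beta> \<mu> \<alpha> (u t))
    \<and> ((\<exists>c. \<forall>t. V_fun \<beta> \<mu> \<alpha> (u t) = c) \<longleftrightarrow>
        (\<forall>t. AE a in lborel. 0 < a \<longrightarrow> u t a = ubar \<alpha> \<mu> a))"
proof -
  obtain M where M: "AE a in lborel. 0 < a \<longrightarrow> 0 \<le> \<beta> a \<and> \<beta> a \<le> M" using assms(5) by blast
  interpret O: orbit \<beta> \<mu> \<alpha> \<gamma>m M u
    by unfold_locales (use assms M in auto)
  have am: "antimono (\<lambda>t. V_fun \<beta> \<mu> \<alpha> (u t))"
  proof (rule antimonoI)
    fix x y :: real assume xy: "x \<le> y"
    have "V_fun \<beta> \<mu> \<alpha> (u (x + (y - x))) \<le> V_fun \<beta> \<mu> \<alpha> (u x)"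
      by (rule O.V_mono) (use xy in simp)
    then show "V_fun \<beta> \<mu> \<alpha> (u y) \<le> V_fun \<beta> \<mu> \<alpha> (u x)" by simp
  qed
  have iff: "(\<exists>c. \<forall>t. V_fun \<beta> \<mu> \<alpha> (u t) = c) \<longleftrightarrow>
        (\<forall>t. AE a in lborel. 0 < a \<longrightarrow> u t a = ubar \<alpha> \<mu> a)"
  proof
    assume "\<exists>c. \<forall>t. V_fun \<beta> \<mu> \<alpha> (u t) = c"
    then obtain c where "\<forall>t. V_fun \<beta> \<mu> \<alpha> (u t) = c" by blast
    then show "\<forall>t. AE a in lborel. 0 < a \<longrightarrow> u t a = ubar \<alpha> \<mu> a" by (rule O.const_imp)
  next
    assume h: "\<forall>t. AE a in lborel. 0 < a \<longrightarrow> u t a = ubar \<alpha> \<mu> a"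
    have "\<forall>t. V_fun \<beta> \<mu> \<alpha> (u t) = 0" using V_zero[OF assms(2)] h by blast
    then show "\<exists>c. \<forall>t. V_fun \<beta> \<mu> \<alpha> (u t) = c" by blast
  qed
  show ?thesis using am iff by blast
qed

end
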